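(* (1) For every $k\geq 1$, every orderable $k$-hypergraph is separable. (2) For $k=1,2$, every separable $k$-hypergraph is orderable; but for each $k\geq 3$ there exists a separable $k$-hypergraph that is not orderable.
   Context: A $k$-hypergraph on a finite set $V$ is a set $\mathcal{H}$ of $k$-element subsets of $V$. Let $n=|V|$. $\mathcal{H}$ is orderable if there is an ordering $v_1,\dots,v_n$ of $V$ such that each $v_i$ is either dominating, meaning $E\in\mathcal{H}$ for every $k$-set $E$ with $v_i\in E\subseteq\{v_1,\dots,v_i\}$, or isolating, meaning $E\notin\mathcal{H}$ for every $k$-set $E$ with $v_i\in E\subseteq\{v_1,\dots,v_i\}$. $\mathcal{H}$ is separable if there is a labeling $a:V\to\mathbb{Z}$ such that $\mathcal{H}=\{E\subseteq V:|E|=k,\ \sum_{v\in E}a(v)\geq 0\}$. *)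

theory Defs
  imports Main
begin

definition is_hypergraph :: "nat \<Rightarrow> 'a set \<Rightarrow> 'a set set \<Rightarrow> bool" where
  "is_hypergraph k V H \<longleftrightarrow> finite V \<and> (\<forall>E\<in>H. E \<subseteq> V \<and> card E = k)"

definition dominating :: "nat \<Rightarrow> 'a set set \<Rightarrow> 'a list \<Rightarrow> nat \<Rightarrow> bool" where
  "dominating k H vs i \<longleftrightarrow>
     (\<forall>E. card E = k \<and> vs ! i \<in> E \<and> E \<subseteq> set (take (Suc i) vs) \<longrightarrow> E \<in> H)"

definition isolating :: "nat \<Rightarrow> 'a set set \<Rightarrow> 'a list \<Rightarrow> nat \<Rightarrow> bool" where
  "isolating k H vs i \<longleftrightarrow>
     (\<forall>E. card E = k \<and> vs ! i \<in> E \<and> E \<subseteq> set (take (Suc i) vs) \<longrightarrow> E \<notin> H)"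

definition orderable :: "nat \<Rightarrow> 'a set \<Rightarrow> 'a set set \<Rightarrow> bool" where
  "orderable k V H \<longleftrightarrow>
     (\<exists>vs. distinct vs \<and> set vs = V \<and>
        (\<forall>i < length vs. dominating k H vs i \<or> isolating k H vs i))"

definition separable :: "nat \<Rightarrow> 'a set \<Rightarrow> 'a set set \<Rightarrow> bool" where
  "separable k V H \<longleftrightarrow>
     (\<exists>a :: 'a \<Rightarrow> int. H = {E. E \<subseteq> V \<and> card E = k \<and> (\<Sum>v\<in>E. a v) \<ge> 0})"

end

theory Submission
  imports Defs
begin

lemma part1_aux:
  assumes "k \<ge> 1" "distinct vs" "\<forall>i<length vs. dominating k H vs i \<or> isolating k H vs i"
  shows "\<exists>a::'a\<Rightarrow>int. \<forall>E. E \<subseteq> set vs \<and> card E = k \<longrightarrow> (E \<in> H \<longleftrightarrow> 0 \<le> sum a E)"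
  using assms(2,3)
proof (induction vs rule: rev_induct)
  case Nil
  then show ?case using assms(1) by auto
next
  case (snoc v vs)
  have dvs: "distinct vs" "v \<notin> set vs" using snoc.prems by auto
  have pre: "\<forall>i<length vs. dominating k H vs i \<or> isolating k H vs i"
  proof (intro allI impI)
    fix i assume i: "i < length vs"
    have e1: "(vs @ [v]) ! i = vs ! i" using i by (simp add: nth_append)
    have e2: "take (Suc i) (vs @ [v]) = take (Suc i) vs" using i by simp
    have "dominating k H (vs @ [v]) i \<or> isolating k H (vs @ [v]) i" using snoc.prems i by auto
    then show "dominating k H vs i \<or> isolating k H vs i"
      unfolding dominating_def isolating_def e1 e2 .
  qed
  obtain a :: "'a \<Rightarrow> int" where a: "\<forall>E. E \<subseteq> set vs \<and> card E = k \<longrightarrow> (E \<in> H \<longleftrightarrow> 0 \<le> sum a E)"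
    using snoc.IH dvs pre by blast
  define S where "S = (\<Sum>u\<in>set vs. \<bar>a u\<bar>)"
  define D where "D = dominating k H (vs @ [v]) (length vs)"
  define b where "b = a(v := (if D then 1 + S else -(1 + S)))"
  have last: "D \<or> isolating k H (vs @ [v]) (length vs)" using snoc.prems D_def by auto
  have tk: "take (Suc (length vs)) (vs @ [v]) = vs @ [v]" by simp
  have nv: "(vs @ [v]) ! length vs = v" by simp
  show ?case
  proof (intro exI allI impI)
    fix E assume E: "E \<subseteq> set (vs @ [v]) \<and> card E = k"
    show "E \<in> H \<longleftrightarrow> 0 \<le> sum b E"
    proof (cases "v \<in> E")
      case False
      then have "E \<subseteq> set vs" using E by auto
      moreover have "sum b E = sum a E" using False unfolding b_def by (intro sum.cong) auto
      ultimately show ?thesis using a E by auto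
    next
      case True
      define E' where "E' = E - {v}"
      have E'sub: "E' \<subseteq> set vs" using E E'_def by auto
      have fin: "finite E'" using E'sub finite_subset by blast
      have "sum b E = b v + sum b E'" using True fin E'_def
        by (metis finite_insert insert_Diff sum.insert Diff_iff singletonI)
      moreover have "sum b E' = sum a E'" unfolding b_def E'_def by (intro sum.cong) auto
      moreover have "\<bar>sum a E'\<bar> \<le> S"
      proof -
        have "\<bar>sum a E'\<bar> \<le> (\<Sum>u\<in>E'. \<bar>a u\<bar>)" by (rule sum_abs)
        also have "\<dots> \<le> S" unfolding S_def using E'sub by (intro sum_mono2) auto
        finally show ?thesis .
      qed
      moreover have bv: "b v = (if D then 1 + S else -(1 + S))" unfolding b_def by simp
      ultimately have sb: "(D \<longrightarrow> sum b E > 0) \<and> (\<not> D \<longrightarrow> sum b E < 0)" by auto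
      have cond: "card E = k \<and> (vs @ [v]) ! length vs \<in> E \<and> E \<subseteq> set (take (Suc (length vs)) (vs @ [v]))"
        using E True by simp
      show ?thesis
      proof (cases D)
        case True
        then have "E \<in> H" using cond unfolding D_def dominating_def by blast
        then show ?thesis using sb True by auto
      next
        case False
        then have "isolating k H (vs @ [v]) (length vs)" using last by auto
        then have "E \<notin> H" using cond unfolding isolating_def by blast
        then show ?thesis using sb False by auto
      qed
    qed
  qed
qed

lemma key_pair:
  fixes p q :: int
  assumes "(if p \<ge> 0 then 2*p else -2*p-1) \<le> (if q \<ge> 0 then 2*q else -2*q-1)"
  shows "0 \<le> p + q \<longleftrightarrow> 0 \<le> q"
  using assms by (auto split: if_splits)

lemma part2_aux:
  assumes k: "k = 1 \<or> k = 2" and hg: "is_hypergraph k V H" and sep: "separable k V H"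
  shows "orderable k V H"
proof -
  obtain a :: "'a \<Rightarrow> int" where aH: "H = {E. E \<subseteq> V \<and> card E = k \<and> (\<Sum>v\<in>E. a v) \<ge> 0}"
    using sep unfolding separable_def by blast
  have "finite V" using hg unfolding is_hypergraph_def by blast
  then obtain xs where xs: "distinct xs" "set xs = V" using finite_distinct_list by blast
  define key where "key = (\<lambda>u. if a u \<ge> 0 then 2 * a u else -2 * a u - 1)"
  define vs where "vs = sort_key key xs"
  have vsd: "distinct vs" using xs unfolding vs_def by simp
  have vss: "set vs = V" using xs unfolding vs_def by simp
  have sorted: "sorted (map key vs)" unfolding vs_def by simp
  have keymono: "key (vs ! j) \<le> key (vs ! i)" if "j \<le> i" "i < length vs" for i j
  proof -
    have "map key vs ! j \<le> map key vs ! i"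
      using sorted that by (intro sorted_nth_mono) auto
    then show ?thesis using that by simp
  qed
  show ?thesis unfolding orderable_def
  proof (intro exI conjI allI impI)
    show "distinct vs" "set vs = V" by (fact vsd, fact vss)
    fix i assume i: "i < length vs"
    let ?x = "vs ! i"
    have main: "E \<in> H \<longleftrightarrow> 0 \<le> a ?x"
      if E: "card E = k" "?x \<in> E" "E \<subseteq> set (take (Suc i) vs)" for E
    proof -
      have EV: "E \<subseteq> V" using E(3) vss by (meson set_take_subset subset_trans)
      have "0 \<le> sum a E \<longleftrightarrow> 0 \<le> a ?x"
      proof (cases "k = 1")
        case True
        then have "E = {?x}" using E by (metis card_1_singletonE singletonD)
        then show ?thesis by simp
      next
        case False
        then have "card E = 2" using k E by simp
        then obtain u where u: "E = {?x, u}" "u \<noteq> ?x" using E(2)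
          by (metis card_2_iff insert_commute insertE singletonD)
        have "u \<in> set (take (Suc i) vs)" using u E(3) by auto
        then obtain j where j: "j < length (take (Suc i) vs)" "take (Suc i) vs ! j = u"
          by (auto simp: in_set_conv_nth)
        have ji: "j \<le> i" "vs ! j = u" using j i by auto
        have "key u \<le> key ?x" using keymono[OF ji(1) i] ji by simp
        then have "0 \<le> a u + a ?x \<longleftrightarrow> 0 \<le> a ?x"
          unfolding key_def by (rule key_pair)
        moreover have "sum a E = a u + a ?x" using u by simp
        ultimately show ?thesis by simp
      qed
      then show ?thesis using aH EV E(1) by auto
    qed
    show "dominating k H vs i \<or> isolating k H vs i"
    proof (cases "0 \<le> a ?x")
      case True
      then show ?thesis unfolding dominating_def using main by blast
    next
      case False
      then show ?thesis unfolding isolating_def using main by blast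
    qed
  qed
qed

lemma part3_aux:
  fixes k :: nat
  assumes k3: "k \<ge> 3"
  shows "\<exists>(V::nat set) H. is_hypergraph k V H \<and> separable k V H \<and> \<not> orderable k V H"
proof -
  define V :: "nat set" where "V = {0..k}"
  define a :: "nat \<Rightarrow> int" where "a = (\<lambda>n. if n < 2 then 1 else if n < 4 then -1 else 0)"
  define H where "H = {E. E \<subseteq> V \<and> card E = k \<and> (\<Sum>v\<in>E. a v) \<ge> 0}"
  have finV: "finite V" unfolding V_def by simp
  have cardV: "card V = Suc k" unfolding V_def by simp
  have SV: "sum a V = 0"
  proof -
    have "sum a V = sum a {0..3}"
      unfolding V_def using k3 by (intro sum.mono_neutral_right) (auto simp: a_def)
    also have "\<dots> = 0" by (simp add: a_def numeral_eq_Suc)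
    finally show ?thesis .
  qed
  have sumdiff: "sum a (V - {w}) = - a w" if "w \<in> V" for w
    using sum_diff1[OF finV, of a w] that SV by simp
  have cardd: "card (V - {w}) = k" if "w \<in> V" for w using that cardV finV by simp
  have hg: "is_hypergraph k V H" unfolding is_hypergraph_def H_def using finV by auto
  have sp: "separable k V H" unfolding separable_def H_def by blast
  have no: "\<not> orderable k V H"
  proof
    assume "orderable k V H"
    then obtain vs where vs: "distinct vs" "set vs = V"
      "\<forall>i<length vs. dominating k H vs i \<or> isolating k H vs i" unfolding orderable_def by blast
    have len: "length vs = Suc k" using distinct_card[OF vs(1)] vs(2) cardV by simp
    have tk: "set (take (Suc k) vs) = V" using len vs(2) by simp
    let ?v = "vs ! k"
    have vV: "?v \<in> V" using len vs(2) by (metis lessI nth_mem)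
    obtain w where w: "w \<in> {2,3}" "w \<noteq> ?v"
      by (metis insertI1 insertI2 numeral_eq_iff semiring_norm(89))
    obtain w' where w': "w' \<in> {0,1}" "w' \<noteq> ?v"
      by (metis insertI1 insertI2 zero_neq_one)
    have wV: "w \<in> V" "w' \<in> V" using w w' k3 unfolding V_def by auto
    have E1: "card (V - {w}) = k \<and> ?v \<in> V - {w} \<and> V - {w} \<subseteq> set (take (Suc k) vs)"
      using cardd[OF wV(1)] vV w tk by auto
    have E2: "card (V - {w'}) = k \<and> ?v \<in> V - {w'} \<and> V - {w'} \<subseteq> set (take (Suc k) vs)"
      using cardd[OF wV(2)] vV w' tk by auto
    have in1: "V - {w} \<in> H" unfolding H_def using sumdiff[OF wV(1)] cardd[OF wV(1)] w
      by (auto simp: a_def)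
    have in2: "V - {w'} \<notin> H" unfolding H_def using sumdiff[OF wV(2)] w'
      by (auto simp: a_def)
    have "dominating k H vs k \<or> isolating k H vs k" using vs(3) len by simp
    then show False
      unfolding dominating_def isolating_def using E1 E2 in1 in2 by blast
  qed
  show ?thesis using hg sp no by blast
qed

theorem proposition3:
  shows "(\<forall>(k::nat) (V::'a set) H. k \<ge> 1 \<longrightarrow> is_hypergraph k V H \<longrightarrow>
            orderable k V H \<longrightarrow> separable k V H)
       \<and> (\<forall>(k::nat) (V::'a set) H. (k = 1 \<or> k = 2) \<longrightarrow> is_hypergraph k V H \<longrightarrow>
            separable k V H \<longrightarrow> orderable k V H)
       \<and> (\<forall>k::nat. k \<ge> 3 \<longrightarrow>
            (\<exists>(V::nat set) H. is_hypergraph k V H \<and> separable k V H \<and> \<not> orderable k V H))"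
proof (intro conjI allI impI)
  fix k :: nat and V :: "'a set" and H
  assume k: "k \<ge> 1" and hg: "is_hypergraph k V H" and ord: "orderable k V H"
  obtain vs where vs: "distinct vs" "set vs = V"
    "\<forall>i<length vs. dominating k H vs i \<or> isolating k H vs i" using ord unfolding orderable_def by blast
  obtain a :: "'a \<Rightarrow> int" where a: "\<forall>E. E \<subseteq> set vs \<and> card E = k \<longrightarrow> (E \<in> H \<longleftrightarrow> 0 \<le> sum a E)"
    using part1_aux[OF k vs(1) vs(3)] by blast
  have "H = {E. E \<subseteq> V \<and> card E = k \<and> (\<Sum>v\<in>E. a v) \<ge> 0}"
    using a vs(2) hg unfolding is_hypergraph_def by blast
  then show "separable k V H" unfolding separable_def by blast
next
  fix k :: nat and V :: "'a set" and H
  assume "k = 1 \<or> k = 2" "is_hypergraph k V H" "separable k V H"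
  then show "orderable k V H" by (rule part2_aux)
next
  fix k :: nat assume "k \<ge> 3"
  then show "\<exists>(V::nat set) H. is_hypergraph k V H \<and> separable k V H \<and> \<not> orderable k V H"
    by (rule part3_aux)
qed

end
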